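(* Let $k=\mathbb F_{2^f}$ and let $\rho=(R,V,\beta,\Phi)$ be the form ring defined below. A code $C\le k^N$ is of Type $\rho$ if and only if $C$ is a generalized doubly-even self-dual code, i.e. $C$ is a $k$-linear subspace with $C=\{x\in k^N:\sum_i x_ic_i=0\ \forall c\in C\}$ and, for every $c\in C$, $\sum_{i=1}^N c_i=0$ and $\sum_{1\le i<j\le N}c_ic_j=0$.
   Context: $R=V=\mathbb F_{2^f}$ (so codes are $k$-linear subspaces of $k^N$). $\beta(x,y):=\tfrac12\mathrm{tr}(xy)\in\tfrac12\mathbb Z/\mathbb Z$, where $\mathrm{tr}$ is the trace $\mathbb F_{2^f}\to\mathbb F_2\cong\mathbb Z/2\mathbb Z$. Let $O=\mathbb Z_2[\zeta_{2^f-1}]$ be the ring of integers of the unramified extension of degree $f$ of $\mathbb Q_2$, so $R\cong O/2O$; for $x\in R$ the square $x^2$ of any lift of $x$ is well defined in $O/4O$, and the trace $\mathrm{Tr}:O\to\mathbb Z_2$ maps $4O$ into $4\mathbb Z_2$. For $a\in R$ let $\phi_a:V\to\tfrac14\mathbb Z/\mathbb Z$, $\phi_a(x):=\tfrac14\mathrm{Tr}(a^2x^2)$, and $\Phi=\{\phi_a:a\in R\}$. A code of Type $\rho$ is a subspace $C\le k^N$ that is self-dual, i.e. $C=\{x:\sum_i\beta(x_i,c_i)=0\ \forall c\in C\}$, and isotropic, i.e. $\sum_i\phi(c_i)=0$ in $\mathbb Q/\mathbb Z$ for all $c\in C$ and $\phi\in\Phi$. *)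

theory Defs
  imports Complex_Main "HOL-Library.Cardinality"
begin

text \<open>Ambient field k = F_(2^f): a finite field type 'a with CARD('a) = 2^f.
  Vectors of k^N are functions nat => 'a vanishing outside {0..<N}.\<close>

definition kN :: "nat \<Rightarrow> (nat \<Rightarrow> 'a::field) set" where
  "kN N = {x. \<forall>i\<ge>N. x i = 0}"

definition is_subspace :: "nat \<Rightarrow> (nat \<Rightarrow> 'a::field) set \<Rightarrow> bool" where
  "is_subspace N C \<longleftrightarrow> C \<subseteq> kN N \<and> (\<lambda>i. 0) \<in> C \<and>
     (\<forall>x\<in>C. \<forall>y\<in>C. (\<lambda>i. x i + y i) \<in> C) \<and>
     (\<forall>a. \<forall>x\<in>C. (\<lambda>i. a * x i) \<in> C)"

text \<open>Absolute trace tr : F_(2^f) -> F_2, tr x = sum of x^(2^i), i < f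
  (its value is 0 or 1 in the field).\<close>
definition fld_tr :: "nat \<Rightarrow> 'a::field \<Rightarrow> 'a" where
  "fld_tr f x = (\<Sum>i<f. x ^ (2 ^ i))"

definition bit_of :: "'a::field \<Rightarrow> int" where
  "bit_of z = (if z = 0 then 0 else 1)"

text \<open>beta(x,y) = 1/2 tr(xy), as a rational representative of an element of (1/2)Z/Z.\<close>
definition beta :: "nat \<Rightarrow> 'a::field \<Rightarrow> 'a \<Rightarrow> rat" where
  "beta f x y = of_int (bit_of (fld_tr f (x * y))) / 2"

text \<open>O/4O, O the ring of integers of the unramified degree f extension of Q_2,
  realised as the ring W_2(k) of 2-typical Witt vectors of length 2 over k
  (char k = 2): pairs (x0,x1) with the Witt vector operations.\<close>
definition wadd :: "'a::field \<times> 'a \<Rightarrow> 'a \<times> 'a \<Rightarrow> 'a \<times> 'a" where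
  "wadd u v = (fst u + fst v, snd u + snd v + fst u * fst v)"

definition wmul :: "'a::field \<times> 'a \<Rightarrow> 'a \<times> 'a \<Rightarrow> 'a \<times> 'a" where
  "wmul u v = (fst u * fst v, (fst u)^2 * snd v + (fst v)^2 * snd u)"

definition wfrob :: "'a::field \<times> 'a \<Rightarrow> 'a \<times> 'a" where
  "wfrob u = ((fst u)^2, (snd u)^2)"

text \<open>A lift of x in R = O/2O to O/4O (the Teichmueller lift).\<close>
definition wlift :: "'a::field \<Rightarrow> 'a \<times> 'a" where
  "wlift x = (x, 0)"

text \<open>Trace O/4O -> Z/4Z: sum of the Galois (Frobenius) conjugates; the result lies in
  W_2(F_2) = Z/4Z, identified via (b0,b1) |-> b0 + 2 b1.\<close>
fun wtr_aux :: "nat \<Rightarrow> 'a::field \<times> 'a \<Rightarrow> 'a \<times> 'a" where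
  "wtr_aux 0 w = (0, 0)"
| "wtr_aux (Suc n) w = wadd (wtr_aux n w) ((wfrob ^^ n) w)"

definition wtrace :: "nat \<Rightarrow> 'a::field \<times> 'a \<Rightarrow> int" where
  "wtrace f w = (let t = wtr_aux f w in bit_of (fst t) + 2 * bit_of (snd t))"

text \<open>phi_a(x) = 1/4 Tr(a^2 x^2), as a rational representative of an element of (1/4)Z/Z.\<close>
definition phi :: "nat \<Rightarrow> 'a::field \<Rightarrow> 'a \<Rightarrow> rat" where
  "phi f a x = of_int (wtrace f (wmul (wmul (wlift a) (wlift a)) (wmul (wlift x) (wlift x)))) / 4"

definition type_rho_code :: "nat \<Rightarrow> nat \<Rightarrow> (nat \<Rightarrow> 'a::field) set \<Rightarrow> bool" where
  "type_rho_code f N C \<longleftrightarrow> is_subspace N C \<and>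
     C = {x \<in> kN N. \<forall>c\<in>C. (\<Sum>i<N. beta f (x i) (c i)) \<in> \<int>} \<and>
     (\<forall>c\<in>C. \<forall>a. (\<Sum>i<N. phi f a (c i)) \<in> \<int>)"

definition gen_doubly_even_self_dual :: "nat \<Rightarrow> (nat \<Rightarrow> 'a::field) set \<Rightarrow> bool" where
  "gen_doubly_even_self_dual N C \<longleftrightarrow> is_subspace N C \<and>
     C = {x \<in> kN N. \<forall>c\<in>C. (\<Sum>i<N. x i * c i) = 0} \<and>
     (\<forall>c\<in>C. (\<Sum>i<N. c i) = 0 \<and> (\<Sum>j<N. \<Sum>i<j. c i * c j) = 0)"

end

theory Submission
  imports Defs "HOL-Computational_Algebra.Polynomial"
begin


lemma card_ge2: "CARD('a::{field,finite}) \<ge> 2"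
proof -
  have "card {0::'a, 1} = 2" by simp
  moreover have "card {0::'a, 1} \<le> CARD('a)" by (rule card_mono) auto
  ultimately show ?thesis by simp
qed

lemma fermat_ff: "(x::'a::{field,finite}) ^ CARD('a) = x"
proof (cases "x = 0")
  case True then show ?thesis using card_ge2[where 'a='a] by (simp add: power_0_left)
next
  case False
  let ?S = "UNIV - {0::'a}"
  have bij: "bij_betw (\<lambda>y. x * y) ?S ?S"
    unfolding bij_betw_def inj_on_def
  proof (intro conjI ballI impI)
    show "(\<lambda>y. x * y) ` ?S = ?S"
    proof
      show "(\<lambda>y. x * y) ` ?S \<subseteq> ?S" using False by auto
      show "?S \<subseteq> (\<lambda>y. x * y) ` ?S"
      proof
        fix z assume "z \<in> ?S"
        then have "z = x * (z / x)" "z / x \<in> ?S" using False by auto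
        then show "z \<in> (\<lambda>y. x * y) ` ?S" by blast
      qed
    qed
  qed (use False in auto)
  have "(\<Prod>y\<in>?S. x * y) = (\<Prod>y\<in>?S. y)"
    using prod.reindex_bij_betw[OF bij, of "\<lambda>y. y"] by simp
  moreover have "(\<Prod>y\<in>?S. x * y) = x ^ card ?S * (\<Prod>y\<in>?S. y)"
    by (simp add: prod.distrib)
  moreover have "(\<Prod>y\<in>?S. y) \<noteq> 0" by simp
  ultimately have "x ^ card ?S = 1" by simp
  moreover have "card ?S = CARD('a) - 1" by (simp add: card_Diff_subset)
  moreover have "CARD('a) = Suc (CARD('a) - 1)" using card_ge2[where 'a='a] by simp
  ultimately have "x ^ CARD('a) = x ^ Suc (card ?S)" by simp
  also have "\<dots> = x * x ^ card ?S" by (rule power_Suc)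
  also have "\<dots> = x" using \<open>x ^ card ?S = 1\<close> by simp
  finally show ?thesis .
qed

lemma char2:
  assumes "CARD('a::{field,finite}) = 2 ^ f"
  shows "(1::'a) + 1 = 0"
proof -
  have f: "f \<ge> 1" using card_ge2[where 'a='a] assms by (cases f) auto
  have "even (CARD('a))" using assms f by (cases f) auto
  then have "(-1::'a) ^ CARD('a) = 1" by simp
  moreover have "(-1::'a) ^ CARD('a) = -1" by (rule fermat_ff)
  ultimately have "(-1::'a) = 1" by simp
  then show ?thesis by (metis add.right_inverse)
qed



definition e2 :: "nat \<Rightarrow> (nat \<Rightarrow> 'a::comm_ring_1) \<Rightarrow> 'a" where
  "e2 n g = (\<Sum>j<n. \<Sum>i<j. g i * g j)"

lemma e2_0[simp]: "e2 0 g = 0" by (simp add: e2_def)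

lemma e2_Suc: "e2 (Suc n) g = e2 n g + (\<Sum>i<n. g i) * g n"
  by (simp add: e2_def sum_distrib_right)

lemma e2_zero[simp]: "e2 n (\<lambda>i. 0) = 0" by (simp add: e2_def)

lemma e2_add: "e2 n (\<lambda>i. x i + r i) = e2 n x + e2 n r + (\<Sum>i<n. x i) * (\<Sum>i<n. r i) - (\<Sum>i<n. x i * r i)"
  by (induction n) (simp_all add: e2_Suc sum.distrib algebra_simps)

lemma e2_shift: "e2 (Suc n) g = g 0 * (\<Sum>i<n. g (Suc i)) + e2 n (\<lambda>i. g (Suc i))"
proof (induction n)
  case 0 then show ?case by (simp add: e2_def)
next
  case (Suc n)
  have "e2 (Suc (Suc n)) g = e2 (Suc n) g + (\<Sum>i<Suc n. g i) * g (Suc n)" by (rule e2_Suc)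
  also have "(\<Sum>i<Suc n. g i) = g 0 + (\<Sum>i<n. g (Suc i))" by (rule sum.lessThan_Suc_shift)
  finally show ?case using Suc by (simp add: e2_Suc algebra_simps)
qed

lemma e2_rot:
  assumes "g (Suc n) = g 0"
  shows "e2 (Suc n) (\<lambda>i. g (Suc i)) = e2 (Suc n) g"
proof -
  have "e2 (Suc n) (\<lambda>i. g (Suc i)) = e2 n (\<lambda>i. g (Suc i)) + (\<Sum>i<n. g (Suc i)) * g (Suc n)"
    by (rule e2_Suc)
  then show ?thesis using assms by (simp add: e2_shift algebra_simps)
qed

lemma e2_scale: "e2 n (\<lambda>i. a * g i) = a^2 * e2 n g"
  by (simp add: e2_def sum_distrib_left power2_eq_square algebra_simps)

lemma e2_matrix:
  fixes M :: "nat \<Rightarrow> nat \<Rightarrow> 'a::comm_ring_1"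
  shows "(\<Sum>i<N. e2 f (M i)) + e2 N (\<lambda>i. \<Sum>n<f. M i n)
       = (\<Sum>n<f. e2 N (\<lambda>i. M i n)) + e2 f (\<lambda>n. \<Sum>i<N. M i n)"
proof (induction N)
  case 0 then show ?case by simp
next
  case (Suc N)
  have sw: "(\<Sum>n<f. \<Sum>i<N. M i n) = (\<Sum>i<N. \<Sum>n<f. M i n)" by (rule sum.swap)
  have ea: "e2 f (\<lambda>n. (\<Sum>i<N. M i n) + M N n) = e2 f (\<lambda>n. \<Sum>i<N. M i n) + e2 f (M N)
     + (\<Sum>n<f. \<Sum>i<N. M i n) * (\<Sum>n<f. M N n) - (\<Sum>n<f. (\<Sum>i<N. M i n) * M N n)"
    using e2_add[of f "\<lambda>n. \<Sum>i<N. M i n" "M N"] by simp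
  have l: "(\<Sum>i<Suc N. e2 f (M i)) + e2 (Suc N) (\<lambda>i. \<Sum>n<f. M i n)
     = (\<Sum>i<N. e2 f (M i)) + e2 f (M N) + e2 N (\<lambda>i. \<Sum>n<f. M i n)
       + (\<Sum>i<N. \<Sum>n<f. M i n) * (\<Sum>n<f. M N n)" by (simp add: e2_Suc)
  have r: "(\<Sum>n<f. e2 (Suc N) (\<lambda>i. M i n)) + e2 f (\<lambda>n. \<Sum>i<Suc N. M i n)
     = (\<Sum>n<f. e2 N (\<lambda>i. M i n)) + (\<Sum>n<f. (\<Sum>i<N. M i n) * M N n)
       + e2 f (\<lambda>n. (\<Sum>i<N. M i n) + M N n)" by (simp add: e2_Suc sum.distrib)
  show ?case unfolding l r ea using Suc sw by (simp add: algebra_simps)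
qed

lemma c2_add_self: "(1::'a::field) + 1 = 0 \<Longrightarrow> x + x = (0::'a)"
  by (metis distrib_left mult_1_right mult_zero_right)

lemma c2_minus: "(1::'a::field) + 1 = 0 \<Longrightarrow> - x = (x::'a)"
  by (metis add_eq_0_iff c2_add_self)

lemma c2_sq_add: "(1::'a::field) + 1 = 0 \<Longrightarrow> (x + y)^2 = x^2 + (y::'a)^2"
proof -
  assume h: "(1::'a) + 1 = 0"
  have "(x + y)^2 = x^2 + y^2 + (x*y + x*y)" by (simp add: power2_eq_square algebra_simps)
  then show ?thesis using c2_add_self[OF h, of "x*y"] by simp
qed

lemma c2_frob_add: "(1::'a::field) + 1 = 0 \<Longrightarrow> (x + y)^(2^n) = x^(2^n) + (y::'a)^(2^n)"
proof (induction n)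
  case 0 then show ?case by simp
next
  case (Suc n)
  have "(x + y)^(2^Suc n) = ((x+y)^(2^n))^2" by (simp add: power_mult[symmetric] mult.commute)
  also have "\<dots> = (x^(2^n))^2 + (y^(2^n))^2" using Suc c2_sq_add by simp
  also have "\<dots> = x^(2^Suc n) + y^(2^Suc n)" by (simp add: power_mult[symmetric] mult.commute)
  finally show ?case .
qed

lemma c2_frob_sum: "(1::'a::field) + 1 = 0 \<Longrightarrow> (\<Sum>i\<in>A. g i)^(2^n) = (\<Sum>i\<in>A. (g i::'a)^(2^n))"
proof (induction A rule: infinite_finite_induct)
  case (insert x F) then show ?case by (simp add: c2_frob_add)
qed simp_all

lemma c2_frob_e2: "(1::'a::field) + 1 = 0 \<Longrightarrow> (e2 N g)^(2^n) = e2 N (\<lambda>i. (g i::'a)^(2^n))"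
  unfolding e2_def by (simp add: c2_frob_sum power_mult_distrib)

lemma idem01: "(z::'a::field)^2 = z \<Longrightarrow> z = 0 \<or> z = 1"
  by (metis power2_eq_square mult_cancel_right1 mult_right_cancel) 



lemma f_pos: "CARD('a::{field,finite}) = 2 ^ f \<Longrightarrow> f \<ge> 1"
  using card_ge2[where 'a='a] by (cases f) auto

lemma pow_f: "CARD('a::{field,finite}) = 2 ^ f \<Longrightarrow> (y::'a)^(2^f) = y"
  using fermat_ff[of y] by simp

lemma sum_rot:
  assumes "f \<ge> 1" "g f = g 0"
  shows "(\<Sum>m<f. g (Suc m)) = (\<Sum>m<f. (g m :: 'b::comm_monoid_add))"
proof -
  obtain f' where f: "f = Suc f'" using assms by (cases f) auto
  have "(\<Sum>m<Suc f'. g m) = g 0 + (\<Sum>m<f'. g (Suc m))" by (rule sum.lessThan_Suc_shift)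
  then show ?thesis using assms f by (simp add: add.commute)
qed

lemma tr_sq_arg:
  assumes "CARD('a::{field,finite}) = 2 ^ f"
  shows "fld_tr f ((y::'a)^2) = fld_tr f y"
proof -
  have "fld_tr f (y^2) = (\<Sum>m<f. y^(2^Suc m))"
    unfolding fld_tr_def by (simp add: power_mult[symmetric] mult.commute)
  also have "\<dots> = (\<Sum>m<f. y^(2^m))"
    by (rule sum_rot[where g="\<lambda>m. y^(2^m)"]) (use f_pos[OF assms] pow_f[OF assms] in auto)
  finally show ?thesis by (simp add: fld_tr_def)
qed

lemma tr_sum:
  assumes "(1::'a::field) + 1 = 0"
  shows "fld_tr f (\<Sum>i\<in>A. g i) = (\<Sum>i\<in>A. fld_tr f (g i::'a))"
  unfolding fld_tr_def c2_frob_sum[OF assms] by (rule sum.swap)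

lemma tr_add:
  assumes "(1::'a::field) + 1 = 0"
  shows "fld_tr f (x + y) = fld_tr f x + fld_tr f (y::'a)"
  unfolding fld_tr_def using c2_frob_add[OF assms] by (simp add: sum.distrib)

lemma tr_zero[simp]: "fld_tr f (0::'a::field) = 0"
  unfolding fld_tr_def by (simp add: power_0_left)

lemma tr_sq:
  assumes "CARD('a::{field,finite}) = 2 ^ f"
  shows "(fld_tr f (y::'a))^2 = fld_tr f y"
proof -
  have c: "(1::'a) + 1 = 0" by (rule char2[OF assms])
  have "(fld_tr f y)^2 = (fld_tr f y)^(2^1)" by simp
  also have "\<dots> = fld_tr f (y^2)" unfolding fld_tr_def c2_frob_sum[OF c]
    by (simp add: power_mult[symmetric] mult.commute)
  also have "\<dots> = fld_tr f y" by (rule tr_sq_arg[OF assms])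
  finally show ?thesis .
qed

definition t2 :: "nat \<Rightarrow> 'a::field \<Rightarrow> 'a" where
  "t2 f y = e2 f (\<lambda>m. y^(2^m))"

lemma t2_sq:
  assumes "CARD('a::{field,finite}) = 2 ^ f"
  shows "(t2 f (y::'a))^2 = t2 f y"
proof -
  have c: "(1::'a) + 1 = 0" by (rule char2[OF assms])
  obtain f' where f: "f = Suc f'" using f_pos[OF assms] by (cases f) auto
  have "(t2 f y)^2 = (t2 f y)^(2^1)" by simp
  also have "\<dots> = e2 f (\<lambda>m. (y^(2^m))^(2^1))" unfolding t2_def by (rule c2_frob_e2[OF c])
  also have "\<dots> = e2 f (\<lambda>m. y^(2^Suc m))" by (simp add: power_mult[symmetric] mult.commute)
  also have "\<dots> = e2 f (\<lambda>m. y^(2^m))" unfolding f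
    by (rule e2_rot[where g="\<lambda>m. y^(2^m)"]) (use pow_f[OF assms] f in auto)
  finally show ?thesis by (simp add: t2_def)
qed

lemma frob_iter: "(wfrob ^^ n) (y, 0) = (y^(2^n), (0::'a::field))"
proof (induction n)
  case (Suc n) then show ?case by (simp add: wfrob_def power_mult[symmetric] mult.commute)
qed simp

lemma wtr_aux_lift: "wtr_aux n (y, 0) = (\<Sum>m<n. y^(2^m), e2 n (\<lambda>m. (y::'a::field)^(2^m)))"
  by (induction n) (simp_all add: wadd_def frob_iter e2_Suc)

lemma wtrace_lift: "wtrace f (y, 0) = bit_of (fld_tr f (y::'a::field)) + 2 * bit_of (t2 f y)"
  by (simp add: wtrace_def wtr_aux_lift fld_tr_def t2_def)

lemma phi_eq: "phi f a x = of_int (wtrace f (a*a*(x*x), 0::'a::field)) / 4"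
  by (simp add: phi_def wmul_def wlift_def)

lemma nondeg:
  assumes "CARD('a::{field,finite}) = 2 ^ f"
  shows "\<exists>t::'a. fld_tr f t \<noteq> 0"
proof (rule ccontr)
  assume "\<not> ?thesis"
  then have all: "\<forall>t::'a. fld_tr f t = 0" by simp
  obtain f' where f: "f = Suc f'" using f_pos[OF assms] by (cases f) auto
  define p :: "'a poly" where "p = (\<Sum>m<f. monom 1 (2^m))"
  have cp: "coeff p k = (\<Sum>m<f. if 2^m = k then 1 else 0)" for k
    unfolding p_def coeff_sum by simp
  have "coeff p (2^f') = 1"
  proof -
    have "(\<Sum>m<f. if 2^m = (2::nat)^f' then 1 else (0::'a)) = (\<Sum>m\<in>{f'}. 1)"
      by (rule sum.mono_neutral_cong_right) (auto simp: f)
    then show ?thesis using cp by simp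
  qed
  then have p0: "p \<noteq> 0" by auto
  have "degree p \<le> 2^f'"
  proof (rule degree_le, intro allI impI)
    fix i :: nat assume "2^f' < i"
    moreover have "m < f \<Longrightarrow> (2::nat)^m \<le> 2^f'" for m by (simp add: f)
    ultimately show "coeff p i = 0" unfolding cp by (auto intro!: sum.neutral) (metis leD)
  qed
  moreover have "poly p t = fld_tr f t" for t
    unfolding p_def fld_tr_def poly_sum by (simp add: poly_monom)
  then have "{x. poly p x = 0} = UNIV" using all by auto
  then have "CARD('a) \<le> degree p" using card_poly_roots_bound[OF p0] by simp
  ultimately have "(2::nat)^f \<le> 2^f'" using assms by linarith
  then show False by (simp add: f)
qed

lemma sq_surj:
  assumes "(1::'a::{field,finite}) + 1 = 0"
  shows "\<exists>a::'a. a * a = t"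
proof -
  have "inj (\<lambda>x::'a. x * x)"
  proof (rule injI)
    fix x y :: 'a assume "x * x = y * y"
    then have "(x + y)^2 = 0" using c2_sq_add[OF assms, of x y] c2_add_self[OF assms, of "y^2"]
      by (simp add: power2_eq_square)
    then have "x + y = 0" by simp
    then show "x = y" using c2_minus[OF assms, of y] by (simp add: add_eq_0_iff)
  qed
  then have "surj (\<lambda>x::'a. x * x)" by (simp add: finite_UNIV_inj_surj)
  then show ?thesis by (metis surjD)
qed



lemma bit0[simp]: "bit_of (0::'a::field) = 0" by (simp add: bit_of_def)
lemma bit1[simp]: "bit_of (1::'a::field) = 1" by (simp add: bit_of_def)

lemma step4:
  assumes c: "(1::'a::field) + 1 = 0"
    and h: "U = 0 \<or> U = (1::'a)" "V = 0 \<or> V = (1::'a)" "x = 0 \<or> x = (1::'a)" "y = 0 \<or> y = (1::'a)"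
  shows "(U + x = 0 \<or> U + x = 1) \<and> (V + y + U * x = 0 \<or> V + y + U * x = 1) \<and>
    (bit_of U + 2 * bit_of V + (bit_of x + 2 * bit_of y)) mod 4 = (bit_of (U + x) + 2 * bit_of (V + y + U * x)) mod 4"
proof -
  have t: "(2::'a) = 0" using c by (metis one_add_one)
  have th: "(3::'a) = 1" using t by (metis add_0 numeral_plus_one one_add_one semiring_norm(5))
  show ?thesis using h by (elim disjE) (simp_all add: t th)
qed

lemma witt_sum:
  assumes c: "(1::'a::field) + 1 = 0"
    and u: "\<And>i. u i = 0 \<or> u i = (1::'a)" and v: "\<And>i. v i = 0 \<or> v i = (1::'a)"
  shows "((\<Sum>i<N. u i) = 0 \<or> (\<Sum>i<N. u i) = 1) \<and>
         ((\<Sum>i<N. v i) + e2 N u = 0 \<or> (\<Sum>i<N. v i) + e2 N u = 1) \<and>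
         (\<Sum>i<N. bit_of (u i) + 2 * bit_of (v i)) mod 4
            = (bit_of (\<Sum>i<N. u i) + 2 * bit_of ((\<Sum>i<N. v i) + e2 N u)) mod 4"
proof (induction N)
  case 0 then show ?case by simp
next
  case (Suc N)
  define U where "U = (\<Sum>i<N. u i)"
  define V where "V = (\<Sum>i<N. v i) + e2 N u"
  define S where "S = (\<Sum>i<N. bit_of (u i) + 2 * bit_of (v i))"
  have IH: "(U = 0 \<or> U = 1) \<and> (V = 0 \<or> V = 1) \<and> S mod 4 = (bit_of U + 2 * bit_of V) mod 4"
    using Suc unfolding U_def V_def S_def .
  have e1: "(\<Sum>i<Suc N. u i) = U + u N" by (simp add: U_def)
  have e2': "(\<Sum>i<Suc N. v i) + e2 (Suc N) u = V + v N + U * u N"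
    by (simp add: V_def U_def e2_Suc algebra_simps)
  have e3: "(\<Sum>i<Suc N. bit_of (u i) + 2 * bit_of (v i)) = S + (bit_of (u N) + 2 * bit_of (v N))"
    by (simp add: S_def)
  have m: "(S + t) mod 4 = (S mod 4 + t) mod 4" for t :: int by (simp add: mod_add_left_eq)
  have st: "(U + u N = 0 \<or> U + u N = 1) \<and> (V + v N + U * u N = 0 \<or> V + v N + U * u N = 1) \<and>
    (bit_of U + 2 * bit_of V + (bit_of (u N) + 2 * bit_of (v N))) mod 4
     = (bit_of (U + u N) + 2 * bit_of (V + v N + U * u N)) mod 4"
    using IH u[of N] v[of N] by (intro step4[OF c]) auto
  have "(S + (bit_of (u N) + 2 * bit_of (v N))) mod 4
      = ((bit_of U + 2 * bit_of V) mod 4 + (bit_of (u N) + 2 * bit_of (v N))) mod 4"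
    using IH m by simp
  also have "\<dots> = (bit_of U + 2 * bit_of V + (bit_of (u N) + 2 * bit_of (v N))) mod 4"
    by (simp add: mod_add_left_eq)
  finally show ?case unfolding e1 e2' e3 using st by simp
qed

lemma parity_sum:
  fixes N :: nat
  assumes c: "(1::'a::field) + 1 = 0"
    and u: "\<And>i. u i = 0 \<or> u i = (1::'a)"
  shows "((\<Sum>i<N. u i) = 0 \<or> (\<Sum>i<N. u i) = 1) \<and>
         (\<Sum>i<N. bit_of (u i)) mod 2 = bit_of (\<Sum>i<N. u i)"
proof (induction N)
  case 0 then show ?case by simp
next
  case (Suc N)
  have m: "(S + t) mod 2 = (S mod 2 + t) mod 2" for S t :: int by (simp add: mod_add_left_eq)
  have st: "(U + x = 0 \<or> U + x = 1) \<and> (bit_of U + bit_of x) mod 2 = bit_of (U + x)"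
    if "U = 0 \<or> U = (1::'a)" "x = 0 \<or> x = (1::'a)" for U x
  proof -
    have t: "(2::'a) = 0" using c by (metis one_add_one)
    show ?thesis using that by (elim disjE) (simp_all add: t)
  qed
  have "(\<Sum>i<Suc N. bit_of (u i)) mod 2 = ((\<Sum>i<N. bit_of (u i)) mod 2 + bit_of (u N)) mod 2"
    by (simp add: mod_add_left_eq)
  then show ?case using Suc st[of "\<Sum>i<N. u i" "u N"] u[of N] by simp
qed

lemma rat_int_iff:
  assumes "m \<noteq> 0"
  shows "(of_int k / of_int m :: rat) \<in> \<int> \<longleftrightarrow> m dvd k"
proof
  assume "(of_int k / of_int m :: rat) \<in> \<int>"
  then obtain j where "(of_int k / of_int m :: rat) = of_int j" by (auto elim: Ints_cases)
  then have "(of_int k :: rat) = of_int (j * m)" using assms by (simp add: field_simps)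
  then have "k = j * m" by (simp only: of_int_eq_iff)
  then show "m dvd k" by simp
next
  assume "m dvd k"
  then obtain j where "k = m * j" by auto
  then show "(of_int k / of_int m :: rat) \<in> \<int>" using assms by simp
qed



lemma beta_int_iff:
  fixes N :: nat
  assumes card: "CARD('a::{field,finite}) = 2 ^ f"
  shows "(\<Sum>i<N. beta f (x i) (c i :: 'a)) \<in> \<int> \<longleftrightarrow> fld_tr f (\<Sum>i<N. x i * c i) = 0"
proof -
  have c: "(1::'a) + 1 = 0" by (rule char2[OF card])
  define u where "u i = fld_tr f (x i * c i)" for i
  have u01: "u i = 0 \<or> u i = 1" for i using idem01[OF tr_sq[OF card]] unfolding u_def by blast
  have eq: "(\<Sum>i<N. beta f (x i) (c i)) = of_int (\<Sum>i<N. bit_of (u i)) / of_int 2"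
    by (simp add: beta_def u_def sum_divide_distrib)
  have ps: "((\<Sum>i<N. u i) = 0 \<or> (\<Sum>i<N. u i) = 1) \<and> (\<Sum>i<N. bit_of (u i)) mod 2 = bit_of (\<Sum>i<N. u i)"
    using parity_sum[where u=u and N=N, OF c u01] by simp
  have "(\<Sum>i<N. beta f (x i) (c i)) \<in> \<int> \<longleftrightarrow> (2::int) dvd (\<Sum>i<N. bit_of (u i))"
    unfolding eq by (rule rat_int_iff) simp
  also have "\<dots> \<longleftrightarrow> (\<Sum>i<N. u i) = 0" using ps by (auto simp: dvd_eq_mod_eq_0)
  also have "(\<Sum>i<N. u i) = fld_tr f (\<Sum>i<N. x i * c i)" unfolding u_def by (simp add: tr_sum[OF c])
  finally show ?thesis .
qed

lemma dual_iff:
  fixes N :: nat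
  assumes card: "CARD('a::{field,finite}) = 2 ^ f" and sub: "is_subspace N (C :: (nat \<Rightarrow> 'a) set)"
  shows "(\<forall>c\<in>C. fld_tr f (\<Sum>i<N. x i * c i) = 0) \<longleftrightarrow> (\<forall>c\<in>C. (\<Sum>i<N. x i * c i) = 0)"
proof
  assume h: "\<forall>c\<in>C. fld_tr f (\<Sum>i<N. x i * c i) = 0"
  show "\<forall>c\<in>C. (\<Sum>i<N. x i * c i) = 0"
  proof (rule ccontr)
    assume "\<not> ?thesis"
    then obtain c where cC: "c \<in> C" and s: "(\<Sum>i<N. x i * c i) \<noteq> 0" by auto
    obtain t :: 'a where t: "fld_tr f t \<noteq> 0" using nondeg[OF card] by auto
    define s' where "s' = (\<Sum>i<N. x i * c i)"
    have mem: "(\<lambda>i. (t / s') * c i) \<in> C" using sub cC unfolding is_subspace_def by blast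
    then have "fld_tr f (\<Sum>i<N. x i * ((t / s') * c i)) = 0" using h[rule_format, OF mem] by simp
    moreover have "(\<Sum>i<N. x i * ((t / s') * c i)) = (t / s') * s'"
    proof -
      have "(\<Sum>i<N. x i * ((t / s') * c i)) = (\<Sum>i<N. (t / s') * (x i * c i))"
        by (intro sum.cong refl) (simp add: mult.left_commute)
      also have "\<dots> = (t / s') * s'" unfolding s'_def by (rule sum_distrib_left[symmetric])
      finally show ?thesis .
    qed
    moreover have "(t / s') * s' = t" using s unfolding s'_def by simp
    ultimately show False using t by simp
  qed
qed simp

lemma phi_int_iff:
  fixes N :: nat
  assumes card: "CARD('a::{field,finite}) = 2 ^ f" and sc: "(\<Sum>i<N. c i) = (0::'a)"
  shows "(\<Sum>i<N. phi f a (c i)) \<in> \<int> \<longleftrightarrow> fld_tr f (a * a * e2 N c) = 0"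
proof -
  have cc: "(1::'a) + 1 = 0" by (rule char2[OF card])
  define y where "y i = a * a * (c i * c i)" for i
  define u where "u i = fld_tr f (y i)" for i
  define v where "v i = t2 f (y i)" for i
  have u01: "u i = 0 \<or> u i = 1" for i using idem01[OF tr_sq[OF card]] unfolding u_def by blast
  have v01: "v i = 0 \<or> v i = 1" for i using idem01[OF t2_sq[OF card]] unfolding v_def by blast
  note ws = witt_sum[where u=u and v=v and N=N, OF cc u01 v01]
  have ysq: "y i = (a * c i)^(2^1)" for i by (simp add: y_def power2_eq_square)
  have ysum: "(\<Sum>i<N. y i) = 0"
  proof -
    have "(\<Sum>i<N. y i) = (\<Sum>i<N. a * c i)^(2^1)" unfolding ysq c2_frob_sum[OF cc] ..
    also have "\<dots> = 0" by (simp add: sum_distrib_left[symmetric] sc)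
    finally show ?thesis .
  qed
  have U: "(\<Sum>i<N. u i) = 0" unfolding u_def tr_sum[OF cc, symmetric] ysum by simp
  define M where "M i m = y i ^ (2^m)" for i m
  have V: "(\<Sum>i<N. v i) + e2 N u = fld_tr f (a * a * e2 N c)"
  proof -
    have "(\<Sum>i<N. v i) + e2 N u = (\<Sum>i<N. e2 f (M i)) + e2 N (\<lambda>i. \<Sum>m<f. M i m)"
      unfolding v_def u_def t2_def fld_tr_def M_def by (rule refl)
    also have "\<dots> = (\<Sum>m<f. e2 N (\<lambda>i. M i m)) + e2 f (\<lambda>m. \<Sum>i<N. M i m)"
      by (rule e2_matrix)
    also have "(\<lambda>m. \<Sum>i<N. M i m) = (\<lambda>m. 0)"
      unfolding M_def c2_frob_sum[OF cc, symmetric] ysum by (simp add: power_0_left)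
    also have "(\<lambda>m. e2 N (\<lambda>i. M i m)) = (\<lambda>m. (e2 N y)^(2^m))"
      unfolding M_def c2_frob_e2[OF cc] ..
    also have "e2 N y = (e2 N (\<lambda>i. a * c i))^(2^1)"
      unfolding ysq c2_frob_e2[OF cc] ..
    also have "e2 N (\<lambda>i. a * c i) = a * a * e2 N c" by (simp add: e2_scale power2_eq_square)
    finally have "(\<Sum>i<N. v i) + e2 N u = fld_tr f ((a * a * e2 N c)^2)"
      by (simp add: fld_tr_def)
    then show ?thesis using tr_sq_arg[OF card] by simp
  qed
  have eq: "(\<Sum>i<N. phi f a (c i)) = of_int (\<Sum>i<N. bit_of (u i) + 2 * bit_of (v i)) / of_int 4"
    by (simp add: phi_eq wtrace_lift u_def v_def y_def sum_divide_distrib)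
  have "(\<Sum>i<N. phi f a (c i)) \<in> \<int> \<longleftrightarrow> (4::int) dvd (\<Sum>i<N. bit_of (u i) + 2 * bit_of (v i))"
    unfolding eq by (rule rat_int_iff) simp
  also have "\<dots> \<longleftrightarrow> fld_tr f (a * a * e2 N c) = 0"
  proof -
    define W where "W = fld_tr f (a * a * e2 N c)"
    define S where "S = (\<Sum>i<N. bit_of (u i) + 2 * bit_of (v i))"
    have W01: "W = 0 \<or> W = 1" using ws unfolding U V W_def by blast
    have Sm: "S mod 4 = (bit_of (0::'a) + 2 * bit_of W) mod 4" using ws unfolding U V W_def S_def by blast
    have "(4::int) dvd S \<longleftrightarrow> W = 0"
    proof (cases "W = 0")
      case True then show ?thesis using Sm by (simp add: dvd_eq_mod_eq_0)
    next
      case False then have "W = 1" using W01 by blast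
      then show ?thesis using Sm False by (simp add: dvd_eq_mod_eq_0)
    qed
    then show ?thesis unfolding S_def W_def .
  qed
  finally show ?thesis .
qed

theorem mainTheorem4:
  fixes f N :: nat and C :: "(nat \<Rightarrow> 'a::{field,finite}) set"
  assumes "CARD('a) = 2 ^ f"
  shows "type_rho_code f N C \<longleftrightarrow> gen_doubly_even_self_dual N C"
proof (cases "is_subspace N C")
  case False then show ?thesis
    unfolding type_rho_code_def gen_doubly_even_self_dual_def by simp
next
  case sub: True
  note card = assms
  have cc: "(1::'a) + 1 = 0" by (rule char2[OF card])
  have dualeq: "{x \<in> kN N. \<forall>c\<in>C. (\<Sum>i<N. beta f (x i) (c i)) \<in> \<int>}
      = {x \<in> kN N. \<forall>c\<in>C. (\<Sum>i<N. x i * c i) = 0}"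
  proof -
    have "(\<forall>c\<in>C. (\<Sum>i<N. beta f (x i) (c i)) \<in> \<int>) \<longleftrightarrow> (\<forall>c\<in>C. (\<Sum>i<N. x i * c i) = 0)" for x
      using beta_int_iff[OF card] dual_iff[OF card sub] by simp
    then show ?thesis by blast
  qed
  show ?thesis
  proof (cases "C = {x \<in> kN N. \<forall>c\<in>C. (\<Sum>i<N. x i * c i) = 0}")
    case False then show ?thesis
      unfolding type_rho_code_def gen_doubly_even_self_dual_def dualeq by simp
  next
    case dual: True
    have sc: "(\<Sum>i<N. c i) = 0" if cC: "c \<in> C" for c
    proof -
      have "(\<Sum>i<N. c i * c i) = 0" using cC dual by blast
      then have "(\<Sum>i<N. c i)^(2^1) = 0" unfolding c2_frob_sum[OF cc] by (simp add: power2_eq_square)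
      then show ?thesis by simp
    qed
    have e: "(\<forall>a. (\<Sum>i<N. phi f a (c i)) \<in> \<int>) \<longleftrightarrow> e2 N c = 0" if cC: "c \<in> C" for c
    proof
      assume h: "\<forall>a. (\<Sum>i<N. phi f a (c i)) \<in> \<int>"
      show "e2 N c = 0"
      proof (rule ccontr)
        assume ne: "e2 N c \<noteq> 0"
        obtain t :: 'a where t: "fld_tr f t \<noteq> 0" using nondeg[OF card] by auto
        obtain a where a: "a * a = t / e2 N c" using sq_surj[OF cc] by blast
        have "fld_tr f (a * a * e2 N c) = 0" using h phi_int_iff[OF card sc[OF cC]] by blast
        then show False using a ne t by simp
      qed
    next
      assume "e2 N c = 0"
      then show "\<forall>a. (\<Sum>i<N. phi f a (c i)) \<in> \<int>" using phi_int_iff[OF card sc[OF cC]] by simp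
    qed
    show ?thesis
      unfolding type_rho_code_def gen_doubly_even_self_dual_def dualeq
      using sub dual sc e by (auto simp: e2_def)
  qed
qed

end
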